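(* If $P\in k(t)\langle\partial_t\rangle$ is irreducible in $k(t)\langle\partial_t\rangle$, then $P$ is irreducible in $K\langle\partial_t\rangle$, i.e. $P$ has no right-hand factor $Q\in K\langle\partial_t\rangle$ with $1\le{\rm ord}(Q)<{\rm ord}(P)$.
   Context: $k$ is an algebraically closed field of characteristic zero and $K=k(t,x_1,\dots,x_n)$; $K\langle\partial_t\rangle$ (resp. $k(t)\langle\partial_t\rangle$) is the ring of linear differential operators in $\partial_t=\partial/\partial t$ with coefficients in $K$ (resp. $k(t)$). An operator of positive order is irreducible if it has no right-hand factor of order strictly between $0$ and its own order. *)

theory Defs
  imports "HOL-Computational_Algebra.Polynomial" "HOL-Computational_Algebra.Fraction_Field"
          "HOL-Library.Poly_Mapping"
begin

text \<open>K = k(t,x_1,...,x_n) is modelled as F(t) where F = k(x_1,...,x_n) is the fraction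
 field of the multivariate polynomial ring over k in the variables of the finite type 'v
 (monomials are finitely supported exponent maps 'v =>0 nat).\<close>

type_synonym ('v, 'k) mpoly_field = "((('v \<Rightarrow>\<^sub>0 nat) \<Rightarrow>\<^sub>0 'k) fract)"
type_synonym 'a ratfun = "'a poly fract"

definition alg_closed :: "'k::field itself \<Rightarrow> bool" where
  "alg_closed _ \<longleftrightarrow> (\<forall>p :: 'k poly. degree p > 0 \<longrightarrow> (\<exists>x. poly p x = 0))"

lift_definition ratfun_deriv :: "'a::idom ratfun \<Rightarrow> 'a ratfun"
  is "\<lambda>(a, b). (pderiv a * b - a * pderiv b, b * b)"
proof -
  fix x y :: "'a poly \<times> 'a poly"
  assume "fractrel x y"
  then obtain a b c d where xy: "x = (a, b)" "y = (c, d)" and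
    nz: "b \<noteq> 0" "d \<noteq> 0" and eq: "a * d = c * b"
    by (cases x, cases y) auto
  have deq: "pderiv a * d + a * pderiv d = pderiv c * b + c * pderiv b"
    using arg_cong[OF eq, of pderiv] by (simp add: pderiv_mult algebra_simps)
  have "(pderiv a * b - a * pderiv b) * (d * d) = (pderiv c * d - c * pderiv d) * (b * b)"
  proof -
    have "(pderiv c * d - c * pderiv d) * (b * b)
        = (pderiv c * b) * (b * d) - (c * b) * (b * pderiv d)" by (simp add: algebra_simps)
    also have "\<dots> = (pderiv a * d + a * pderiv d - c * pderiv b) * (b * d) - (a * d) * (b * pderiv d)"
      using deq eq by (simp add: algebra_simps)
    also have "\<dots> = pderiv a * b * (d * d) - (c * b) * (d * pderiv b)"
      by (simp add: algebra_simps)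
    also have "\<dots> = (pderiv a * b - a * pderiv b) * (d * d)"
      using eq by (simp add: algebra_simps)
    finally show ?thesis by simp
  qed
  then show "fractrel ((\<lambda>(a, b). (pderiv a * b - a * pderiv b, b * b)) x)
                      ((\<lambda>(a, b). (pderiv a * b - a * pderiv b, b * b)) y)"
    using xy nz by simp
qed

definition const_mpf :: "'k::field \<Rightarrow> ('v::linorder, 'k) mpoly_field" where
  "const_mpf c = Fract (Poly_Mapping.single 0 c) 1"

definition embed_ratfun :: "'k::field ratfun \<Rightarrow> ('v::linorder, 'k) mpoly_field ratfun" where
  "embed_ratfun r = (let (a, b) = (SOME (a, b). b \<noteq> 0 \<and> r = Fract a b)
     in Fract (map_poly const_mpf a) (map_poly const_mpf b))"

text \<open>An operator  sum_i a_i \<partial>^i  with coefficients in a differential ring (R, D)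
 is represented by the polynomial with coefficients a_i (coefficients on the left);
 the order is the degree.  The (noncommutative) product is given by the Leibniz rule
 \<partial>^i b = sum_l (i choose l) D^l(b) \<partial>^(i-l).\<close>

definition op_mult :: "('a::comm_ring_1 \<Rightarrow> 'a) \<Rightarrow> 'a poly \<Rightarrow> 'a poly \<Rightarrow> 'a poly" where
  "op_mult D P Q = (\<Sum>i\<le>degree P. \<Sum>l\<le>i.
      smult (coeff P i * of_nat (i choose l)) (map_poly (D ^^ l) Q * monom 1 (i - l)))"

definition right_factor :: "('a::comm_ring_1 \<Rightarrow> 'a) \<Rightarrow> 'a poly \<Rightarrow> 'a poly \<Rightarrow> bool" where
  "right_factor D Q P \<longleftrightarrow> (\<exists>L. P = op_mult D L Q)"

definition irreducible_op :: "('a::comm_ring_1 \<Rightarrow> 'a) \<Rightarrow> 'a poly \<Rightarrow> bool" where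
  "irreducible_op D P \<longleftrightarrow> 0 < degree P \<and>
     \<not> (\<exists>Q. 1 \<le> degree Q \<and> degree Q < degree P \<and> right_factor D Q P)"

end

theory Submission
  imports Defs
begin


definition mono_ev :: "('v::finite \<Rightarrow> 'k::comm_ring_1) \<Rightarrow> ('v \<Rightarrow>\<^sub>0 nat) \<Rightarrow> 'k" where
  "mono_ev c m = (\<Prod>v\<in>UNIV. c v ^ Poly_Mapping.lookup m v)"

definition ev :: "('v::finite \<Rightarrow> 'k::comm_ring_1) \<Rightarrow> (('v \<Rightarrow>\<^sub>0 nat) \<Rightarrow>\<^sub>0 'k) \<Rightarrow> 'k" where
  "ev c p = (\<Sum>m\<in>Poly_Mapping.keys p. Poly_Mapping.lookup p m * mono_ev c m)"

lemma mono_ev_add: "mono_ev c (m + n) = mono_ev c m * mono_ev c n"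
  by (simp add: mono_ev_def lookup_add power_add prod.distrib)

lemma mono_ev_0: "mono_ev c 0 = 1"
  by (simp add: mono_ev_def)

lemma ev_superset: assumes "finite S" "Poly_Mapping.keys p \<subseteq> S"
  shows "ev c p = (\<Sum>m\<in>S. Poly_Mapping.lookup p m * mono_ev c m)"
  unfolding ev_def
  by (rule sum.mono_neutral_left[OF assms]) (auto simp: in_keys_iff)

lemma ev_add: "ev c (p + q) = ev c p + ev c q"
proof -
  let ?S = "Poly_Mapping.keys p \<union> Poly_Mapping.keys q"
  have "Poly_Mapping.keys (p+q) \<subseteq> ?S" by (rule keys_add)
  then have "ev c (p + q) = (\<Sum>m\<in>?S. Poly_Mapping.lookup (p+q) m * mono_ev c m)"
    by (intro ev_superset) auto
  also have "\<dots> = (\<Sum>m\<in>?S. Poly_Mapping.lookup p m * mono_ev c m) + (\<Sum>m\<in>?S. Poly_Mapping.lookup q m * mono_ev c m)"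
    by (simp add: lookup_add distrib_right sum.distrib)
  also have "\<dots> = ev c p + ev c q"
    by (subst (1 2) ev_superset[of ?S]) auto
  finally show ?thesis .
qed

lemma ev_zero [simp]: "ev c 0 = 0" by (simp add: ev_def)

lemma ev_single [simp]: "ev c (Poly_Mapping.single m a) = a * mono_ev c m"
  by (simp add: ev_def)

lemma update_eq_add: "a \<notin> Poly_Mapping.keys f \<Longrightarrow> Poly_Mapping.update a b f = f + Poly_Mapping.single a b"
  by (rule poly_mapping_eqI) (auto simp: lookup_update lookup_add lookup_single in_keys_iff)

lemma ev_single_mult: "ev c (Poly_Mapping.single m a * q) = a * mono_ev c m * ev c q"
proof (induction q rule: update_induct)
  case const then show ?case by simp
next
  case (update f x y)
  show ?case using update
    by (simp add: update_eq_add distrib_left ev_add mult_single mono_ev_add algebra_simps)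
qed

lemma ev_mult: "ev c (p * q) = ev c p * ev c q"
proof (induction p rule: update_induct)
  case const then show ?case by simp
next
  case (update f x y)
  show ?case using update
    by (simp add: update_eq_add distrib_right ev_add ev_single_mult)
qed

lemma ev_one [simp]: "ev c 1 = 1"
  by (metis ev_single mono_ev_0 mult_1 single_one)

lemma ev_uminus: "ev c (- p) = - ev c p"
proof -
  have "ev c (- p) + ev c p = 0" by (metis ev_add ev_zero add.left_inverse)
  then show ?thesis by (simp add: eq_neg_iff_add_eq_0)
qed

lemma ev_diff: "ev c (p - q) = ev c p - ev c q"
  by (metis ev_add ev_uminus diff_conv_add_uminus)

lemma ev_of_nat: "ev c (of_nat n) = of_nat n"
  by (induction n) (simp_all add: ev_add)

lemma ev_prod: "ev c (prod f A) = prod (\<lambda>x. ev c (f x)) A"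
  by (induction A rule: infinite_finite_induct) (simp_all add: ev_mult)

lemma shift_aux: "(\<Sum>i<n. f (Suc i) * N^Suc i) = (N::nat) * (\<Sum>i<n. f (Suc i) * N^i)"
  by (subst sum_distrib_left) (rule sum.cong, auto)

lemma digits_unique:
  fixes d d' :: "nat \<Rightarrow> nat"
  assumes "\<forall>i<n. d i < N" "\<forall>i<n. d' i < N" "(\<Sum>i<n. d i * N^i) = (\<Sum>i<n. d' i * N^i)"
  shows "\<forall>i<n. d i = d' i"
  using assms
proof (induction n arbitrary: d d')
  case 0 then show ?case by simp
next
  case (Suc n)
  have N: "N > 0" using Suc.prems(1) by auto
  have e: "(\<Sum>i<Suc n. f i * N^i) = f 0 + N * (\<Sum>i<n. f (Suc i) * N^i)" for f :: "nat \<Rightarrow> nat"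
  proof -
    have "(\<Sum>i<Suc n. f i * N^i) = f 0 * N^0 + (\<Sum>i<n. f (Suc i) * N^Suc i)"
      by (rule sum.lessThan_Suc_shift)
    also have "\<dots> = f 0 + N * (\<Sum>i<n. f (Suc i) * N^i)"
      by (simp only: shift_aux power_0 mult_1_right)
    finally show ?thesis .
  qed
  have eq: "d 0 + N * (\<Sum>i<n. d (Suc i) * N^i) = d' 0 + N * (\<Sum>i<n. d' (Suc i) * N^i)"
    using Suc.prems(3) by (simp only: e)
  have d0: "d 0 < N" "d' 0 < N" using Suc.prems(1,2) by auto
  have "(d 0 + N * (\<Sum>i<n. d (Suc i) * N^i)) mod N = d 0" using d0 by simp
  moreover have "(d' 0 + N * (\<Sum>i<n. d' (Suc i) * N^i)) mod N = d' 0" using d0 by simp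
  ultimately have z: "d 0 = d' 0" by (simp only: eq)
  have "N * (\<Sum>i<n. d (Suc i) * N^i) = N * (\<Sum>i<n. d' (Suc i) * N^i)"
    using eq unfolding z by (rule add_left_imp_eq)
  then have "(\<Sum>i<n. d (Suc i) * N^i) = (\<Sum>i<n. d' (Suc i) * N^i)"
    using N by simp
  moreover have "\<forall>i<n. d (Suc i) < N" "\<forall>i<n. d' (Suc i) < N"
    using Suc.prems(1,2) by auto
  ultimately have "\<forall>i<n. d (Suc i) = d' (Suc i)"
    using Suc.IH[of "\<lambda>i. d (Suc i)" "\<lambda>i. d' (Suc i)"] by blast
  then show ?case using z by (auto simp: less_Suc_eq_0_disj)
qed

lemma ev_nonzero_exists:
  fixes p :: "('v::finite \<Rightarrow>\<^sub>0 nat) \<Rightarrow>\<^sub>0 'k::field_char_0"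
  assumes "p \<noteq> 0"
  shows "\<exists>c. ev c p \<noteq> 0"
proof -
  define n where "n = card (UNIV :: 'v set)"
  obtain h where bij: "bij_betw h {..<n} (UNIV :: 'v set)"
    using ex_bij_betw_nat_finite[of "UNIV :: 'v set"] unfolding n_def atLeast0LessThan by auto
  define B where "B = (\<lambda>(m, v). Poly_Mapping.lookup m v) ` (Poly_Mapping.keys p \<times> (UNIV :: 'v set))"
  have finB: "finite B" unfolding B_def by simp
  define N where "N = Suc (Max B)"
  have ltN: "Poly_Mapping.lookup m v < N" if "m \<in> Poly_Mapping.keys p" for m v
  proof -
    have "Poly_Mapping.lookup m v \<in> B" unfolding B_def using that by force
    then show ?thesis unfolding N_def using finB by (simp add: le_imp_less_Suc)
  qed
  define wt where "wt m = (\<Sum>i<n. Poly_Mapping.lookup m (h i) * N^i)" for m :: "'v \<Rightarrow>\<^sub>0 nat"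
  have inj: "inj_on wt (Poly_Mapping.keys p)"
  proof (rule inj_onI)
    fix m m' assume mm: "m \<in> Poly_Mapping.keys p" "m' \<in> Poly_Mapping.keys p" "wt m = wt m'"
    have "\<forall>i<n. Poly_Mapping.lookup m (h i) = Poly_Mapping.lookup m' (h i)"
      by (rule digits_unique[where N=N]) (use mm ltN in \<open>auto simp: wt_def\<close>)
    moreover have "\<forall>v. \<exists>i<n. v = h i" using bij unfolding bij_betw_def by auto
    ultimately show "m = m'" by (metis poly_mapping_eqI)
  qed
  define g where "g = (\<Sum>m\<in>Poly_Mapping.keys p. monom (Poly_Mapping.lookup p m) (wt m))"
  obtain m0 where m0: "m0 \<in> Poly_Mapping.keys p" using assms by (metis all_not_in_conv keys_eq_empty)
  have "coeff g (wt m0) = (\<Sum>m\<in>Poly_Mapping.keys p. if m = m0 then Poly_Mapping.lookup p m else 0)"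
    unfolding g_def coeff_sum coeff_monom
    by (rule sum.cong) (use inj m0 in \<open>auto dest: inj_onD\<close>)
  also have "\<dots> = Poly_Mapping.lookup p m0" using m0 by simp
  finally have "coeff g (wt m0) \<noteq> 0" using m0 by (simp add: in_keys_iff)
  then have "g \<noteq> 0" by auto
  then have "finite {x. poly g x = 0}" by (rule poly_roots_finite)
  then obtain s where s: "poly g s \<noteq> 0"
    using infinite_UNIV_char_0[where 'a='k] by (metis (mono_tags, lifting) UNIV_I mem_Collect_eq finite_subset subsetI)
  define c where "c v = s ^ (N ^ (inv_into {..<n} h v))" for v
  have ch: "c (h i) = s ^ (N ^ i)" if "i < n" for i
    using bij that unfolding c_def bij_betw_def by (simp add: inv_into_f_f)
  have mono: "mono_ev c m = s ^ wt m" for m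
  proof -
    have "mono_ev c m = (\<Prod>i<n. c (h i) ^ Poly_Mapping.lookup m (h i))"
      unfolding mono_ev_def by (rule prod.reindex_bij_betw[OF bij, symmetric])
    also have "\<dots> = (\<Prod>i<n. s ^ (Poly_Mapping.lookup m (h i) * N^i))"
      by (rule prod.cong) (auto simp: ch power_mult[symmetric] mult.commute)
    also have "\<dots> = s ^ wt m" unfolding wt_def by (simp add: power_sum)
    finally show ?thesis .
  qed
  have "ev c p = poly g s"
    unfolding ev_def g_def by (simp add: poly_sum poly_monom mono)
  then show ?thesis using s by (intro exI[of _ c]) simp
qed



lemma map_poly_hom_add:
  assumes "f 0 = 0" "\<And>x y. f (x + y) = f x + f y"
  shows "map_poly f (p + q) = map_poly f p + map_poly f q"
  by (rule poly_eqI) (simp add: coeff_map_poly assms)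

lemma map_poly_hom_mult:
  fixes f :: "'a::comm_ring_1 \<Rightarrow> 'b::comm_ring_1"
  assumes "f 0 = 0" "\<And>x y. f (x + y) = f x + f y" "\<And>x y. f (x * y) = f x * f y"
  shows "map_poly f (p * q) = map_poly f p * map_poly f q"
proof (induction p)
  case 0 then show ?case by simp
next
  case (pCons a p)
  have "map_poly f (pCons a p * q) = map_poly f (smult a q + pCons 0 (p * q))"
    by (simp add: mult_pCons_left)
  also have "\<dots> = smult (f a) (map_poly f q) + pCons 0 (map_poly f p * map_poly f q)"
    by (simp add: map_poly_hom_add[OF assms(1,2)] map_poly_smult assms map_poly_pCons pCons.IH)
  also have "\<dots> = map_poly f (pCons a p) * map_poly f q"
    by (simp add: map_poly_pCons assms(1) mult_pCons_left)
  finally show ?case .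
qed

lemma map_poly_hom_pderiv:
  fixes f :: "'a::idom \<Rightarrow> 'b::idom"
  assumes "f 0 = 0" "\<And>n x. f (of_nat n * x) = of_nat n * f x"
  shows "map_poly f (pderiv p) = pderiv (map_poly f p)"
  by (rule poly_eqI) (simp only: coeff_map_poly coeff_pderiv assms pderiv_0 coeff_0)

definition jF :: "'a::idom \<Rightarrow> 'a fract" where "jF u = Fract u 1"

lemma jF_0 [simp]: "jF 0 = 0" by (simp add: jF_def fract_collapse)
lemma jF_1 [simp]: "jF 1 = 1" by (simp add: jF_def fract_collapse)
lemma jF_add: "jF (x + y) = jF x + jF y" by (simp add: jF_def)
lemma jF_mult: "jF (x * y) = jF x * jF y" by (simp add: jF_def)
lemma jF_inj: "jF x = jF y \<longleftrightarrow> x = y" by (simp add: jF_def eq_fract)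
lemma jF_of_nat: "jF (of_nat n) = of_nat n" by (simp add: jF_def of_nat_fract)
lemma jF_of_nat_mult: "jF (of_nat n * x) = of_nat n * jF x" by (simp add: jF_mult jF_of_nat)
lemma jF_uminus: "jF (- x) = - jF x" by (simp add: jF_def)
lemma jF_diff: "jF (x - y) = jF x - jF y" by (simp add: jF_def)

definition jP :: "'a::idom poly \<Rightarrow> 'a fract poly" where "jP a = map_poly jF a"

lemma jP_add: "jP (p + q) = jP p + jP q"
  unfolding jP_def by (rule map_poly_hom_add) (simp_all add: jF_add)
lemma jP_mult: "jP (p * q) = jP p * jP q"
  unfolding jP_def by (rule map_poly_hom_mult) (simp_all add: jF_add jF_mult)
lemma jP_diff: "jP (p - q) = jP p - jP q"
  unfolding jP_def by (rule poly_eqI) (simp add: coeff_map_poly jF_diff)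
lemma jP_1 [simp]: "jP 1 = 1" by (simp add: jP_def)
lemma jP_0 [simp]: "jP 0 = 0" by (simp add: jP_def)
lemma jP_pderiv: "jP (pderiv p) = pderiv (jP p)"
  unfolding jP_def by (rule map_poly_hom_pderiv) (simp_all add: jF_of_nat_mult)
lemma jP_inj: "jP p = jP q \<longleftrightarrow> p = q"
proof
  assume "jP p = jP q"
  then have "coeff (jP p) n = coeff (jP q) n" for n by simp
  then show "p = q" by (intro poly_eqI) (simp add: jP_def coeff_map_poly jF_inj)
qed simp
lemma jP_eq_0: "jP p = 0 \<longleftrightarrow> p = 0" using jP_inj[of p 0] by simp

lemma ratfun_deriv_Fract:
  "Y \<noteq> 0 \<Longrightarrow> ratfun_deriv (Fract X Y) = Fract (pderiv X * Y - X * pderiv Y) (Y * Y)"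
  by transfer simp



definition tau :: "('v::finite \<Rightarrow> 'k::comm_ring_1) \<Rightarrow> (('v \<Rightarrow>\<^sub>0 nat) \<Rightarrow>\<^sub>0 'k) poly \<Rightarrow> 'k poly" where
  "tau c a = map_poly (ev c) a"

lemma tau_add: "tau c (p + q) = tau c p + tau c q"
  unfolding tau_def by (rule map_poly_hom_add) (simp_all add: ev_add)
lemma tau_mult: "tau c (p * q) = tau c p * tau c q"
  unfolding tau_def by (rule map_poly_hom_mult) (simp_all add: ev_add ev_mult)
lemma tau_diff: "tau c (p - q) = tau c p - tau c q"
  unfolding tau_def by (rule poly_eqI) (simp add: coeff_map_poly ev_diff)
lemma tau_0 [simp]: "tau c 0 = 0" by (simp add: tau_def)
lemma tau_1 [simp]: "tau c 1 = 1" by (simp add: tau_def)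
lemma tau_pderiv:
  fixes c :: "'v::{finite,linorder} \<Rightarrow> 'k::field"
  shows "tau c (pderiv p) = pderiv (tau c p)"
  unfolding tau_def by (rule map_poly_hom_pderiv) (simp_all add: ev_mult ev_of_nat)

definition reg :: "('v::{finite,linorder} \<Rightarrow> 'k::field) \<Rightarrow> ('v, 'k) mpoly_field ratfun \<Rightarrow> bool" where
  "reg c f \<longleftrightarrow> (\<exists>a b. tau c b \<noteq> 0 \<and> f = Fract (jP a) (jP b))"

definition sig :: "('v::{finite,linorder} \<Rightarrow> 'k::field) \<Rightarrow> ('v, 'k) mpoly_field ratfun \<Rightarrow> 'k ratfun" where
  "sig c f = (SOME r. \<exists>a b. tau c b \<noteq> 0 \<and> f = Fract (jP a) (jP b) \<and> r = Fract (tau c a) (tau c b))"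

lemma tau_nz_imp: "tau c b \<noteq> 0 \<Longrightarrow> jP b \<noteq> 0"
  by (auto simp: jP_eq_0)

lemma sig_eq:
  fixes c :: "'v::{finite,linorder} \<Rightarrow> 'k::field"
  assumes "tau c b \<noteq> 0"
  shows "sig c (Fract (jP a) (jP b)) = Fract (tau c a) (tau c b)"
  unfolding sig_def
proof (rule someI2[where a="Fract (tau c a) (tau c b)"])
  show "\<exists>a' b'. tau c b' \<noteq> 0 \<and> Fract (jP a) (jP b) = Fract (jP a') (jP b') \<and>
        Fract (tau c a) (tau c b) = Fract (tau c a') (tau c b')"
    using assms by blast
next
  fix r assume "\<exists>a' b'. tau c b' \<noteq> 0 \<and> Fract (jP a) (jP b) = Fract (jP a') (jP b') \<and>
        r = Fract (tau c a') (tau c b')"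
  then obtain a' b' where b': "tau c b' \<noteq> 0" and e: "Fract (jP a) (jP b) = Fract (jP a') (jP b')"
    and r: "r = Fract (tau c a') (tau c b')" by blast
  have "jP a * jP b' = jP a' * jP b"
    using e tau_nz_imp[OF assms] tau_nz_imp[OF b'] by (simp add: eq_fract)
  then have "a * b' = a' * b" by (simp add: jP_mult[symmetric] jP_inj)
  then have "tau c a * tau c b' = tau c a' * tau c b" by (simp add: tau_mult[symmetric])
  then show "r = Fract (tau c a) (tau c b)" using r b' assms by (simp add: eq_fract)
qed

lemma reg_Fract: "tau c b \<noteq> 0 \<Longrightarrow> reg c (Fract (jP a) (jP b))"
  unfolding reg_def by blast

lemma reg_0: "reg c 0" and sig_0: "sig c 0 = 0"
  for c :: "'v::{finite,linorder} \<Rightarrow> 'k::field"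
proof -
  have z: "(0 :: ('v, 'k) mpoly_field ratfun) = Fract (jP 0) (jP 1)" by (simp add: fract_collapse)
  show "reg c 0" by (subst z, rule reg_Fract) simp
  show "sig c 0 = 0" by (subst z, subst sig_eq) (simp_all add: fract_collapse)
qed

lemma reg_1: "reg c 1" and sig_1: "sig c 1 = 1"
  for c :: "'v::{finite,linorder} \<Rightarrow> 'k::field"
proof -
  have z: "(1 :: ('v, 'k) mpoly_field ratfun) = Fract (jP 1) (jP 1)" by (simp add: fract_collapse)
  show "reg c 1" by (subst z, rule reg_Fract) simp
  show "sig c 1 = 1" by (subst z, subst sig_eq) (simp_all add: fract_collapse)
qed

lemma reg_add: assumes "reg c f" "reg c g"
  shows "reg c (f + g) \<and> sig c (f + g) = sig c f + sig c g"
proof -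
  obtain a b where ab: "tau c b \<noteq> 0" "f = Fract (jP a) (jP b)" using assms(1) reg_def by blast
  obtain a' b' where ab': "tau c b' \<noteq> 0" "g = Fract (jP a') (jP b')" using assms(2) reg_def by blast
  have nz: "jP b \<noteq> 0" "jP b' \<noteq> 0" using ab ab' tau_nz_imp by auto
  have t: "tau c (b * b') \<noteq> 0" using ab ab' by (simp add: tau_mult)
  have fg: "f + g = Fract (jP (a * b' + a' * b)) (jP (b * b'))"
    using ab ab' nz by (simp add: jP_add jP_mult)
  have "reg c (f+g)" unfolding fg by (rule reg_Fract[OF t])
  moreover have "sig c (f+g) = Fract (tau c (a * b' + a' * b)) (tau c (b * b'))"
    unfolding fg by (rule sig_eq[OF t])
  moreover have "\<dots> = sig c f + sig c g" using ab ab' by (simp add: sig_eq tau_add tau_mult)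
  ultimately show ?thesis by simp
qed

lemma reg_mult: assumes "reg c f" "reg c g"
  shows "reg c (f * g) \<and> sig c (f * g) = sig c f * sig c g"
proof -
  obtain a b where ab: "tau c b \<noteq> 0" "f = Fract (jP a) (jP b)" using assms(1) reg_def by blast
  obtain a' b' where ab': "tau c b' \<noteq> 0" "g = Fract (jP a') (jP b')" using assms(2) reg_def by blast
  have t: "tau c (b * b') \<noteq> 0" using ab ab' by (simp add: tau_mult)
  have fg: "f * g = Fract (jP (a * a')) (jP (b * b'))"
    using ab ab' by (simp add: jP_mult)
  have "reg c (f*g)" unfolding fg by (rule reg_Fract[OF t])
  moreover have "sig c (f*g) = Fract (tau c (a * a')) (tau c (b * b'))"
    unfolding fg by (rule sig_eq[OF t])
  moreover have "\<dots> = sig c f * sig c g" using ab ab' by (simp add: sig_eq tau_mult)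
  ultimately show ?thesis by simp
qed

lemma reg_deriv:
  fixes c :: "'v::{finite,linorder} \<Rightarrow> 'k::field"
  assumes "reg c f"
  shows "reg c (ratfun_deriv f) \<and> sig c (ratfun_deriv f) = ratfun_deriv (sig c f)"
proof -
  obtain a b where ab: "tau c b \<noteq> 0" "f = Fract (jP a) (jP b)" using assms(1) reg_def by blast
  have nz: "jP b \<noteq> 0" using ab tau_nz_imp by auto
  have t: "tau c (b * b) \<noteq> 0" using ab by (simp add: tau_mult)
  have fg: "ratfun_deriv f = Fract (jP (pderiv a * b - a * pderiv b)) (jP (b * b))"
    using ab nz by (simp add: ratfun_deriv_Fract jP_diff jP_mult jP_pderiv)
  have "reg c (ratfun_deriv f)" unfolding fg by (rule reg_Fract[OF t])
  moreover have "sig c (ratfun_deriv f) = Fract (tau c (pderiv a * b - a * pderiv b)) (tau c (b * b))"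
    unfolding fg by (rule sig_eq[OF t])
  moreover have "\<dots> = ratfun_deriv (sig c f)" using ab
    by (simp add: sig_eq tau_mult tau_diff tau_pderiv ratfun_deriv_Fract)
  ultimately show ?thesis by simp
qed



lemma jP_smult: "jP (smult d a) = smult (jF d) (jP a)"
  unfolding jP_def by (rule map_poly_smult) (simp_all add: jF_mult)

lemma jP_pCons: "jP (pCons x a) = pCons (jF x) (jP a)"
  unfolding jP_def by (simp add: map_poly_pCons)

lemma poly_clear: "\<exists>a d. d \<noteq> 0 \<and> smult (jF d) p = jP a"
  for p :: "'a::idom fract poly"
proof (induction p)
  case 0 then show ?case by (intro exI[of _ 0] exI[of _ 1]) simp
next
  case (pCons x p)
  then obtain a d where ad: "d \<noteq> 0" "smult (jF d) p = jP a" by blast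
  obtain u v where x: "x = Fract u v" "v \<noteq> 0" by (cases x) auto
  have "jF (v * d) * x = jF (u * d)" using x by (simp add: jF_def eq_fract algebra_simps)
  then have "smult (jF (v * d)) (pCons x p) = jP (pCons (u * d) (smult v a))"
  proof -
    have h: "smult (jF (v * d)) p = smult (jF v) (jP a)"
      using ad by (simp add: jF_mult flip: smult_smult)
    show ?thesis using h \<open>jF (v * d) * x = jF (u * d)\<close> by (simp add: jP_pCons jP_smult)
  qed
  moreover have "v * d \<noteq> 0" using ad x by simp
  ultimately show ?case by blast
qed

lemma K_rep:
  fixes f :: "'a::idom fract poly fract"
  shows "\<exists>a b. b \<noteq> 0 \<and> f = Fract (jP a) (jP b)"
proof -
  obtain N D where f: "f = Fract N D" "D \<noteq> 0" by (cases f) auto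
  obtain aN dN where n: "dN \<noteq> 0" "smult (jF dN) N = jP aN" using poly_clear by blast
  obtain aD dD where d: "dD \<noteq> 0" "smult (jF dD) D = jP aD" using poly_clear by blast
  have "jF (dD * dN) \<noteq> 0" using jF_inj[of "dD * dN" 0] n d by simp
  then have e0: "jF dD * jF dN \<noteq> 0" by (simp add: jF_mult)
  have e1: "jP (smult dD aN) = [:jF dD * jF dN:] * N"
    using n by (simp add: jP_smult n(2)[symmetric])
  have e2: "jP (smult dN aD) = [:jF dD * jF dN:] * D"
    using d by (simp add: jP_smult d(2)[symmetric] mult.commute)
  have "f = Fract (jP (smult dD aN)) (jP (smult dN aD))"
    unfolding e1 e2 f(1) by (rule mult_fract_cancel[symmetric]) (use e0 in simp)
  moreover have "smult dN aD \<noteq> 0" using d n f(2) e2 e0 by (auto simp: jP_eq_0)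
  ultimately show ?thesis by blast
qed

lemma embed_rep:
  "\<exists>a0 b0. b0 \<noteq> 0 \<and> r = Fract a0 b0 \<and>
     (embed_ratfun r :: ('v::linorder, 'k::field) mpoly_field ratfun)
       = Fract (map_poly const_mpf a0) (map_poly const_mpf b0)"
proof -
  have ex: "\<exists>x. (case x of (a, b) \<Rightarrow> b \<noteq> 0 \<and> r = Fract a b)"
    by (cases r) auto
  obtain a0 b0 where ab: "(SOME (a, b). b \<noteq> 0 \<and> r = Fract a b) = (a0, b0)" by (metis surj_pair)
  have "b0 \<noteq> 0 \<and> r = Fract a0 b0" using someI_ex[OF ex] unfolding ab by simp
  then show ?thesis unfolding embed_ratfun_def ab by auto
qed

lemma map_const_mpf: "map_poly const_mpf a = jP (map_poly (Poly_Mapping.single 0) a)"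
  unfolding jP_def by (subst map_poly_map_poly) (simp_all add: jF_def o_def fract_collapse const_mpf_def[abs_def])

lemma tau_single: "tau c (map_poly (Poly_Mapping.single 0) a) = a"
  unfolding tau_def by (subst map_poly_map_poly) (simp_all add: o_def mono_ev_0)

lemma reg_embed:
  fixes c :: "'v::{finite,linorder} \<Rightarrow> 'k::field"
  shows "reg c (embed_ratfun r) \<and> sig c (embed_ratfun r) = r"
proof -
  obtain a0 b0 where ab: "b0 \<noteq> 0" "r = Fract a0 b0"
    "(embed_ratfun r :: ('v, 'k) mpoly_field ratfun) = Fract (map_poly const_mpf a0) (map_poly const_mpf b0)"
    using embed_rep by blast
  have t: "tau c (map_poly (Poly_Mapping.single 0) b0) \<noteq> 0" using ab by (simp add: tau_single)
  show ?thesis unfolding ab(3) map_const_mpf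
    using reg_Fract[OF t] sig_eq[OF t] ab by (simp add: tau_single)
qed



lemma funpow_zero:
  fixes D :: "'a::zero \<Rightarrow> 'a"
  shows "D 0 = 0 \<Longrightarrow> (D ^^ l) 0 = 0"
  by (induction l) simp_all

lemma coeff_op_mult:
  fixes D :: "'a::comm_ring_1 \<Rightarrow> 'a"
  assumes D0: "D 0 = 0" and N: "degree L \<le> N"
  shows "coeff (op_mult D L Q) k = (\<Sum>i\<le>N. \<Sum>l\<le>i. if i - l \<le> k then
           coeff L i * of_nat (i choose l) * (D^^l) (coeff Q (k - (i - l))) else 0)"
proof -
  have t: "coeff (smult (coeff L i * of_nat (i choose l)) (map_poly (D ^^ l) Q * monom 1 (i - l))) k
      = (if i - l \<le> k then coeff L i * of_nat (i choose l) * (D^^l) (coeff Q (k - (i - l))) else 0)" for i l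
    by (simp add: mult.commute[of _ "monom 1 _"] coeff_monom_mult coeff_map_poly funpow_zero[of D, OF D0])
  have "coeff (op_mult D L Q) k = (\<Sum>i\<le>degree L. \<Sum>l\<le>i. if i - l \<le> k then
           coeff L i * of_nat (i choose l) * (D^^l) (coeff Q (k - (i - l))) else 0)"
    unfolding op_mult_def coeff_sum t ..
  also have "\<dots> = (\<Sum>i\<le>N. \<Sum>l\<le>i. if i - l \<le> k then
           coeff L i * of_nat (i choose l) * (D^^l) (coeff Q (k - (i - l))) else 0)"
  proof (rule sum.mono_neutral_left)
    show "finite {..N}" by simp
    show "{..degree L} \<subseteq> {..N}" using N by auto
    show "\<forall>i\<in>{..N} - {..degree L}. (\<Sum>l\<le>i. if i - l \<le> k then
           coeff L i * of_nat (i choose l) * (D^^l) (coeff Q (k - (i - l))) else 0) = 0"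
      by (auto simp: coeff_eq_0 intro!: sum.neutral)
  qed
  finally show ?thesis .
qed

lemma op_mult_map:
  fixes sig :: "'a::comm_ring_1 \<Rightarrow> 'b::comm_ring_1" and D1 :: "'a \<Rightarrow> 'a" and D2 :: "'b \<Rightarrow> 'b"
  assumes R0: "R 0" and R1: "R 1"
    and Radd: "\<And>x y. R x \<Longrightarrow> R y \<Longrightarrow> R (x + y) \<and> sig (x + y) = sig x + sig y"
    and Rmult: "\<And>x y. R x \<Longrightarrow> R y \<Longrightarrow> R (x * y) \<and> sig (x * y) = sig x * sig y"
    and RD: "\<And>x. R x \<Longrightarrow> R (D1 x) \<and> sig (D1 x) = D2 (sig x)"
    and s0: "sig 0 = 0" and s1: "sig 1 = 1" and D10: "D1 0 = 0" and D20: "D2 0 = 0"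
    and RL: "\<And>i. R (coeff L i)" and RQ: "\<And>i. R (coeff Q i)"
  shows "map_poly sig (op_mult D1 L Q) = op_mult D2 (map_poly sig L) (map_poly sig Q)"
proof -
  have Rnat: "R (of_nat n) \<and> sig (of_nat n) = of_nat n" for n
    by (induction n) (use R0 R1 s0 s1 Radd in auto)
  have Rpow: "R ((D1^^l) x) \<and> sig ((D1^^l) x) = (D2^^l) (sig x)" if "R x" for l x
    by (induction l) (use that RD in auto)
  have Rsum: "R (sum g A) \<and> sig (sum g A) = (\<Sum>x\<in>A. sig (g x))" if "\<And>x. x \<in> A \<Longrightarrow> R (g x)" for g and A :: "nat set"
    using that by (induction A rule: infinite_finite_induct) (use R0 s0 Radd in auto)
  have Rterm: "R (if i - l \<le> k then coeff L i * of_nat (i choose l) * (D1^^l) (coeff Q (k - (i - l))) else 0)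
    \<and> sig (if i - l \<le> k then coeff L i * of_nat (i choose l) * (D1^^l) (coeff Q (k - (i - l))) else 0)
      = (if i - l \<le> k then coeff (map_poly sig L) i * of_nat (i choose l) * (D2^^l) (coeff (map_poly sig Q) (k - (i - l))) else 0)"
    for i l k
    using Rmult[OF Rmult[OF RL Rnat[THEN conjunct1], THEN conjunct1] Rpow[OF RQ, THEN conjunct1]]
      Rmult[OF RL Rnat[THEN conjunct1]] Rpow[OF RQ] Rnat R0 s0
    by (auto simp: coeff_map_poly)
  show ?thesis
  proof (rule poly_eqI)
    fix k
    have "coeff (map_poly sig (op_mult D1 L Q)) k = sig (coeff (op_mult D1 L Q) k)"
      by (simp add: coeff_map_poly s0)
    also have "\<dots> = (\<Sum>i\<le>degree L. \<Sum>l\<le>i. if i - l \<le> k then coeff (map_poly sig L) i * of_nat (i choose l) * (D2^^l) (coeff (map_poly sig Q) (k - (i - l))) else 0)"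
      unfolding coeff_op_mult[of D1 L "degree L", OF D10 order_refl]
      using Rsum Rterm by (simp add: Rsum)
    also have "\<dots> = coeff (op_mult D2 (map_poly sig L) (map_poly sig Q)) k"
      by (rule coeff_op_mult[of D2 "map_poly sig L" "degree L", symmetric, OF D20 map_poly_degree_leq])
    finally show "coeff (map_poly sig (op_mult D1 L Q)) k = coeff (op_mult D2 (map_poly sig L) (map_poly sig Q)) k" .
  qed
qed



lemma ratfun_deriv_0: "ratfun_deriv (0 :: 'a::idom ratfun) = 0"
proof -
  have "ratfun_deriv (Fract (0::'a poly) 1) = Fract (pderiv 0 * 1 - 0 * pderiv 1) (1 * 1)"
    by (rule ratfun_deriv_Fract) simp
  then show ?thesis by (simp add: fract_collapse)
qed

lemma embed_0: "(embed_ratfun 0 :: ('v::linorder, 'k::field) mpoly_field ratfun) = 0"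
proof -
  obtain a0 b0 where ab: "b0 \<noteq> 0" "(0::'k ratfun) = Fract a0 b0"
    "(embed_ratfun 0 :: ('v, 'k) mpoly_field ratfun) = Fract (map_poly const_mpf a0) (map_poly const_mpf b0)"
    using embed_rep by blast
  have "Fract 0 1 = Fract a0 b0" using ab(2) by (simp add: fract_collapse)
  then have "a0 = 0" using ab(1) by (simp add: eq_fract)
  then show ?thesis using ab(3) by (simp add: fract_collapse)
qed

lemma tau_lead_nz:
  fixes c :: "'v::{finite,linorder} \<Rightarrow> 'k::field"
  assumes "ev c (lead_coeff b) \<noteq> 0"
  shows "tau c b \<noteq> 0"
proof
  assume "tau c b = 0"
  then have "coeff (tau c b) (degree b) = 0" by simp
  then show False using assms by (simp add: tau_def coeff_map_poly)
qed

theorem mainTheorem12: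
  fixes P :: "'k::field_char_0 ratfun poly"
  assumes "alg_closed TYPE('k)"
    and "irreducible_op ratfun_deriv P"
  shows "irreducible_op (ratfun_deriv :: ('v::{finite,linorder}, 'k) mpoly_field ratfun \<Rightarrow> _)
           (map_poly embed_ratfun P)"
proof -
  define PK where "PK = (map_poly embed_ratfun P :: ('v, 'k) mpoly_field ratfun poly)"
  have irr: "0 < degree P" "\<not> (\<exists>Q. 1 \<le> degree Q \<and> degree Q < degree P \<and> right_factor ratfun_deriv Q P)"
    using assms(2) unfolding irreducible_op_def by auto
  have cPK: "coeff PK i = embed_ratfun (coeff P i)" for i
    unfolding PK_def by (simp add: coeff_map_poly embed_0)
  have mapback: "map_poly (sig c) PK = P" for c :: "'v \<Rightarrow> 'k"
    by (rule poly_eqI) (simp add: coeff_map_poly sig_0 cPK reg_embed)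
  have d1: "degree PK \<le> degree P" unfolding PK_def by (rule map_poly_degree_leq)
  have d2: "degree P \<le> degree PK"
    using map_poly_degree_leq[of "sig (\<lambda>_::'v. 0::'k)" PK] mapback[of "\<lambda>_. 0"] by simp
  have degPK: "degree PK = degree P" using d1 d2 by simp
  have "\<not> (\<exists>Q. 1 \<le> degree Q \<and> degree Q < degree PK \<and> right_factor ratfun_deriv Q PK)"
  proof
    assume "\<exists>Q. 1 \<le> degree Q \<and> degree Q < degree PK \<and> right_factor ratfun_deriv Q PK"
    then obtain Q L where Q: "1 \<le> degree Q" "degree Q < degree PK" and PKe: "PK = op_mult ratfun_deriv L Q"
      unfolding right_factor_def by blast
    define rep where "rep f = (SOME ab. snd ab \<noteq> 0 \<and> f = Fract (jP (fst ab)) (jP (snd ab)))"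
      for f :: "('v, 'k) mpoly_field ratfun"
    have rep: "snd (rep f) \<noteq> 0 \<and> f = Fract (jP (fst (rep f))) (jP (snd (rep f)))" for f
    proof -
      obtain a b where "b \<noteq> 0" "f = Fract (jP a) (jP b)" using K_rep by blast
      then have "\<exists>ab. snd ab \<noteq> 0 \<and> f = Fract (jP (fst ab)) (jP (snd ab))" by (intro exI[of _ "(a, b)"]) simp
      then show ?thesis unfolding rep_def by (rule someI_ex)
    qed
    define S where "S = coeff L ` {..degree L} \<union> coeff Q ` {..degree Q}"
    have finS: "finite S" unfolding S_def by simp
    define lq where "lq = lead_coeff Q"
    have lqnz: "lq \<noteq> 0" using Q unfolding lq_def by auto
    have alq: "fst (rep lq) \<noteq> 0"
    proof
      assume "fst (rep lq) = 0"
      then have "lq = 0" using rep[of lq] by (simp add: fract_collapse)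
      then show False using lqnz by simp
    qed
    define W where "W = lead_coeff (fst (rep lq)) * (\<Prod>f\<in>S. lead_coeff (snd (rep f)))"
    have "W \<noteq> 0" unfolding W_def using alq rep finS by simp
    then obtain c :: "'v \<Rightarrow> 'k" where c: "ev c W \<noteq> 0" using ev_nonzero_exists by blast
    have evS: "ev c (lead_coeff (snd (rep f))) \<noteq> 0" if "f \<in> S" for f
      using c finS that unfolding W_def by (simp add: ev_mult ev_prod)
    have evA: "ev c (lead_coeff (fst (rep lq))) \<noteq> 0"
      using c unfolding W_def by (simp add: ev_mult)
    have regS: "reg c f" if "f \<in> S" for f
      using rep[of f] reg_Fract[OF tau_lead_nz[OF evS[OF that]], of "fst (rep f)"] by simp
    have RL: "reg c (coeff L i)" for i
    proof (cases "i \<le> degree L")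
      case True then show ?thesis using regS unfolding S_def by auto
    next
      case False then show ?thesis by (simp add: coeff_eq_0 reg_0)
    qed
    have RQ: "reg c (coeff Q i)" for i
    proof (cases "i \<le> degree Q")
      case True then show ?thesis using regS unfolding S_def by auto
    next
      case False then show ?thesis by (simp add: coeff_eq_0 reg_0)
    qed
    have lqS: "lq \<in> S" unfolding S_def lq_def by auto
    have "sig c lq = Fract (tau c (fst (rep lq))) (tau c (snd (rep lq)))"
      using rep[of lq] sig_eq[OF tau_lead_nz[OF evS[OF lqS]]] by metis
    moreover have "tau c (fst (rep lq)) \<noteq> 0" by (rule tau_lead_nz[OF evA])
    moreover have "tau c (snd (rep lq)) \<noteq> 0" by (rule tau_lead_nz[OF evS[OF lqS]])
    ultimately have "sig c lq \<noteq> Fract 0 1" by (simp add: eq_fract)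
    then have slq: "sig c lq \<noteq> 0" by (simp add: fract_collapse)
    have "map_poly (sig c) PK = op_mult ratfun_deriv (map_poly (sig c) L) (map_poly (sig c) Q)"
      unfolding PKe
      by (rule op_mult_map[where R="reg c" and sig="sig c", OF reg_0 reg_1 reg_add reg_mult reg_deriv
            sig_0 sig_1 ratfun_deriv_0 ratfun_deriv_0 RL RQ])
    then have Pe: "P = op_mult ratfun_deriv (map_poly (sig c) L) (map_poly (sig c) Q)"
      by (simp add: mapback)
    have "degree (map_poly (sig c) Q) = degree Q"
      by (rule map_poly_degree_eq) (use slq in \<open>simp add: lq_def\<close>)
    then have "1 \<le> degree (map_poly (sig c) Q) \<and> degree (map_poly (sig c) Q) < degree P
        \<and> right_factor ratfun_deriv (map_poly (sig c) Q) P"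
      using Q degPK Pe unfolding right_factor_def by auto
    then show False using irr(2) by blast
  qed
  then show ?thesis
    using irr(1) degPK unfolding irreducible_op_def PK_def by simp
qed

end
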